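(* Let $f(t)=1+\sum_{i=1}^{d}\binom{x_i}{i}t^{i}$ be a polynomial with positive integer coefficients, where $x_i\ge i-1$ are real numbers, and suppose all roots of $f(t)$ are real. If $x_{i-1}\ge\lceil x_i\rceil$ for all $2\le i\le d$, then $f(t)$ is the $f$-polynomial of a simplicial complex.
   Context: For real $x$ and integer $k\ge0$, $\binom{x}{k}=\frac{x(x-1)\cdots(x-k+1)}{k!}$; for $k\ge1$ and real $y>0$ there is a unique real $x\ge k-1$ with $\binom{x}{k}=y$. A simplicial complex $\Delta$ on a finite ground set is a family of subsets closed under taking subsets; $f_i$ is the number of faces of cardinality $i+1$ ($f_{-1}=1$ counts the empty face), and the $f$-polynomial of a $(d-1)$-dimensional $\Delta$ is $\sum_{i=0}^{d}f_{i-1}t^{i}$. A polynomial is called an $f$-polynomial of a simplicial complex if it equals the $f$-polynomial of some simplicial complex. *)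

theory Defs
  imports "HOL-Analysis.Analysis" "HOL-Computational_Algebra.Polynomial"
begin

definition simplicial_complex :: "'a set \<Rightarrow> 'a set set \<Rightarrow> bool" where
  "simplicial_complex V \<Delta> \<longleftrightarrow> finite V \<and> \<Delta> \<subseteq> Pow V \<and> \<Delta> \<noteq> {} \<and>
     (\<forall>F\<in>\<Delta>. \<forall>G. G \<subseteq> F \<longrightarrow> G \<in> \<Delta>)"

text \<open>Number of faces of cardinality i (this is f_{i-1}).\<close>
definition num_faces :: "'a set set \<Rightarrow> nat \<Rightarrow> nat" where
  "num_faces \<Delta> i = card {F \<in> \<Delta>. card F = i}"

definition f_polynomial :: "'a set \<Rightarrow> 'a set set \<Rightarrow> real poly" where
  "f_polynomial V \<Delta> = (\<Sum>i\<le>card V. monom (real (num_faces \<Delta> i)) i)"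

definition is_f_polynomial :: "real poly \<Rightarrow> bool" where
  "is_f_polynomial p \<longleftrightarrow> (\<exists>(V::nat set) \<Delta>. simplicial_complex V \<Delta> \<and> f_polynomial V \<Delta> = p)"

end

theory Submission imports Defs begin

lemma subset_between:
  assumes "finite B" "A \<subseteq> B" "card A \<le> n" "n \<le> card B"
  shows "\<exists>S. A \<subseteq> S \<and> S \<subseteq> B \<and> card S = n"
proof -
  have fA: "finite A" using assms finite_subset by blast
  have "card (B - A) = card B - card A" using assms fA card_Diff_subset by blast
  then have "n - card A \<le> card (B - A)" using assms by simp
  then obtain C where C: "C \<subseteq> B - A" "card C = n - card A" "finite C"
    by (rule obtain_subset_with_card_n)
  have "card (A \<union> C) = card A + card C"
    using C fA by (intro card_Un_disjoint) auto
  then show ?thesis using C assms by (intro exI[of _ "A \<union> C"]) auto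
qed

lemma gchoose_mono:
  fixes a b :: real
  assumes "real i - 1 \<le> a" "a \<le> b"
  shows "a gchoose i \<le> b gchoose i"
proof -
  have "(\<Prod>k = 0..<i. a - of_nat k) \<le> (\<Prod>k = 0..<i. b - of_nat k)"
    by (rule prod_mono) (use assms in auto)
  then have "fact i * (a gchoose i) \<le> fact i * (b gchoose i)"
    by (simp only: gbinomial_mult_fact)
  then show ?thesis by (simp add: mult_le_cancel_left_pos)
qed

theorem theorem3p3:
  fixes d :: nat and x :: "nat \<Rightarrow> real"
  assumes x_ge: "\<And>i. 1 \<le> i \<Longrightarrow> i \<le> d \<Longrightarrow> x i \<ge> real i - 1"
    and pos_int: "\<And>i. 1 \<le> i \<Longrightarrow> i \<le> d \<Longrightarrow> (x i gchoose i) \<in> \<nat> \<and> (x i gchoose i) > 0"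
    and real_rooted: "\<And>z::complex.
        poly (map_poly complex_of_real (1 + (\<Sum>i=1..d. monom (x i gchoose i) i))) z = 0 \<Longrightarrow> z \<in> \<real>"
    and cond: "\<And>i. 2 \<le> i \<Longrightarrow> i \<le> d \<Longrightarrow> x (i - 1) \<ge> of_int \<lceil>x i\<rceil>"
  shows "is_f_polynomial (1 + (\<Sum>i=1..d. monom (x i gchoose i) i))"
proof -
  define m where "m i = nat \<lceil>x i\<rceil>" for i
  define N where "N i = nat \<lfloor>x i gchoose i\<rfloor>" for i
  have N: "real (N i) = x i gchoose i" if "1 \<le> i" "i \<le> d" for i
  proof -
    have "x i gchoose i \<in> \<nat>" using pos_int[OF that] by blast
    then obtain n where "x i gchoose i = of_nat n" by (auto elim: Nats_cases)
    then show ?thesis by (simp add: N_def)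
  qed
  have mx: "x i \<le> real (m i)" "real (m i) < x i + 1" if "1 \<le> i" "i \<le> d" for i
  proof -
    have "x i \<ge> 0" using x_ge[OF that] that by simp
    then have "real (m i) = of_int \<lceil>x i\<rceil>" by (simp add: m_def)
    then show "x i \<le> real (m i)" "real (m i) < x i + 1" by (simp_all add: ceiling_correct) linarith
  qed
  have mstep: "real (m (Suc i)) \<le> x i" if "1 \<le> i" "Suc i \<le> d" for i
    using cond[of "Suc i"] x_ge[OF _ that(2)] that by (auto simp: m_def)
  have mstep': "m (Suc i) \<le> m i" if "1 \<le> i" "Suc i \<le> d" for i
    using mstep[OF that] mx[of i] that by simp
  have manti0: "m (j + k) \<le> m j" if "1 \<le> j" "j + k \<le> d" for j k
    using that
  proof (induction k)
    case 0 then show ?case by simp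
  next
    case (Suc k) then show ?case using mstep'[of "j + k"] by simp
  qed
  have manti: "m i \<le> m j" if "1 \<le> j" "j \<le> i" "i \<le> d" for i j
    using manti0[of j "i - j"] that by simp
  have mi: "i \<le> m i" if "1 \<le> i" "i \<le> d" for i
  proof -
    have "x i > real i - 1"
    proof (rule ccontr)
      assume "\<not> ?thesis"
      then have "x i = real i - 1" using x_ge[OF that] by simp
      then have "x i gchoose i = 0"
        using that by (simp add: gbinomial_mult_fact[symmetric, of i] gbinomial_prod_rev)
          (rule bexI[of _ "i - 1"], auto)
      then show False using pos_int[OF that] by simp
    qed
    then show ?thesis using mx(1)[OF that] by linarith
  qed
  define A where "A i = (if i < d then {T. T \<subseteq> {0..<m (Suc i)} \<and> card T = i} else {})" for i
  define B where "B i = {T. T \<subseteq> {0..<m i} \<and> card T = i}" for i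
  have exF: "\<exists>S. A i \<subseteq> S \<and> S \<subseteq> B i \<and> card S = N i" if "1 \<le> i" "i \<le> d" for i
  proof (rule subset_between)
    show "finite (B i)" unfolding B_def by (rule finite_subset[of _ "Pow {0..<m i}"]) auto
    show "A i \<subseteq> B i"
      using mstep'[of i] that by (auto simp: A_def B_def)
    show "N i \<le> card (B i)"
    proof -
      have "card (B i) = m i choose i" using n_subsets[of "{0..<m i}" i] by (simp add: B_def)
      moreover have "x i gchoose i \<le> real (m i) gchoose i"
        by (rule gchoose_mono) (use x_ge[OF that] mx[OF that] in auto)
      ultimately show ?thesis using N[OF that] binomial_gbinomial[of "m i" i]
        by (metis of_nat_le_iff)
    qed
    show "card (A i) \<le> N i"
    proof (cases "i < d")
      case True
      have "card (A i) = m (Suc i) choose i"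
        using True n_subsets[of "{0..<m (Suc i)}" i] by (simp add: A_def)
      moreover have "real (m (Suc i)) gchoose i \<le> x i gchoose i"
        by (rule gchoose_mono) (use mstep[of i] mx[of "Suc i"] x_ge[of "Suc i"] that True in auto)
      ultimately show ?thesis using N[OF that] binomial_gbinomial[of "m (Suc i)" i]
        by (metis of_nat_le_iff)
    qed (simp add: A_def)
  qed
  define F where "F i = (SOME S. A i \<subseteq> S \<and> S \<subseteq> B i \<and> card S = N i)" for i
  have F: "A i \<subseteq> F i" "F i \<subseteq> B i" "card (F i) = N i" if "1 \<le> i" "i \<le> d" for i
    using someI_ex[OF exF[OF that]] unfolding F_def by blast+
  define M where "M = Max (m ` {..d})"
  have mM: "m i \<le> M" if "i \<le> d" for i unfolding M_def using that by (intro Max_ge) auto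
  define V where "V = {0..<M}"
  define \<Delta> where "\<Delta> = insert {} (\<Union>i\<in>{1..d}. F i)"
  have Fcard: "card T = i" "T \<subseteq> {0..<m i}" if "T \<in> F i" "1 \<le> i" "i \<le> d" for T i
    using F(2)[OF that(2,3)] that(1) by (auto simp: B_def)
  have sc: "simplicial_complex V \<Delta>"
    unfolding simplicial_complex_def
  proof (intro conjI ballI allI impI)
    show "finite V" by (simp add: V_def)
    show "\<Delta> \<subseteq> Pow V"
      using Fcard mM by (fastforce simp: \<Delta>_def V_def)
    show "\<Delta> \<noteq> {}" by (simp add: \<Delta>_def)
  next
    fix T G assume T: "T \<in> \<Delta>" and G: "G \<subseteq> T"
    show "G \<in> \<Delta>"
    proof (cases "G = {}")
      case True then show ?thesis by (simp add: \<Delta>_def)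
    next
      case False
      with T G obtain i where i: "1 \<le> i" "i \<le> d" "T \<in> F i" by (auto simp: \<Delta>_def)
      note Ti = Fcard[OF i(3,1,2)]
      have fT: "finite T" using Ti(2) finite_subset by blast
      define j where "j = card G"
      have fG: "finite G" using G fT finite_subset by blast
      have j: "1 \<le> j" "j \<le> i"
        using False fG card_gt_0_iff[of G] card_mono[OF fT G] Ti(1) unfolding j_def by auto
      show ?thesis
      proof (cases "j = i")
        case True
        then have "G = T" using G fT Ti(1) j_def card_subset_eq by metis
        then show ?thesis using T by simp
      next
        case False
        then have ji: "j < i" "j < d" using j i by auto
        have "m i \<le> m (Suc j)" using manti[of "Suc j" i] ji i by simp
        then have "G \<in> A j" using G Ti(2) ji by (auto simp: A_def j_def)
        then have "G \<in> F j" using F(1)[of j] j ji by auto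
        then show ?thesis using j ji by (auto simp: \<Delta>_def)
      qed
    qed
  qed
  have nf: "num_faces \<Delta> k = (if k = 0 then 1 else if k \<le> d then N k else 0)" for k
  proof -
    have "{T \<in> \<Delta>. card T = k} = (if k = 0 then {{}} else if k \<le> d then F k else {})"
      using Fcard F(2) by (auto simp: \<Delta>_def)
    then show ?thesis
      using F(3)[of k] by (simp add: num_faces_def)
  qed
  have dM: "d \<le> M"
  proof (cases "d = 0")
    case False then show ?thesis using mi[of d] mM[of d] by simp
  qed simp
  have "f_polynomial V \<Delta> = 1 + (\<Sum>i=1..d. monom (x i gchoose i) i)"
  proof (rule poly_eqI)
    fix n
    have lhs: "coeff (f_polynomial V \<Delta>) n = (if n \<le> M then real (num_faces \<Delta> n) else 0)"
      by (simp add: f_polynomial_def coeff_sum coeff_monom V_def)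
    have rhs: "coeff (1 + (\<Sum>i=1..d. monom (x i gchoose i) i)) n
       = (if n = 0 then 1 else 0) + (if 1 \<le> n \<and> n \<le> d then x n gchoose n else 0)"
      by (simp add: coeff_sum coeff_monom coeff_1)
    show "coeff (f_polynomial V \<Delta>) n = coeff (1 + (\<Sum>i=1..d. monom (x i gchoose i) i)) n"
      unfolding lhs rhs nf using N[of n] dM by auto
  qed
  then show ?thesis unfolding is_f_polynomial_def using sc by blast
qed

end
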